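(* Let $n=2^m\geq 8$. If $B\subseteq X^n$ is a set in which any two words are at Hamming distance at most $4$, then $|B|\leq n^2$. Moreover, there exists a set $B\subseteq X^n$ of diameter $4$ with $|B|=n^2$.
   Context: $X^n$ is the set of words of length $n$ over the alphabet $\{*,0,1\}$ containing exactly one symbol $*$. The Hamming distance between two words is the number of coordinates in which they differ; the diameter of a set is the maximum distance between two of its elements. *)

theory Defs
  imports Main
begin

datatype sym = Star | Zero | One

definition X :: "nat \<Rightarrow> sym list set" where
  "X n = {w. length w = n \<and> card {i. i < n \<and> w ! i = Star} = 1}"

definition hamming :: "sym list \<Rightarrow> sym list \<Rightarrow> nat" where
  "hamming u v = card {i. i < length u \<and> u ! i \<noteq> v ! i}"

definition diam :: "sym list set \<Rightarrow> nat" where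
  "diam B = Max {hamming u v | u v. u \<in> B \<and> v \<in> B}"

end

theory Submission
  imports Defs "HOL-Combinatorics.Permutations"
begin

definition mk :: "nat \<Rightarrow> nat \<Rightarrow> nat set \<Rightarrow> sym list" where
  "mk n c Z = map (\<lambda>i. if i = c then Star else if i \<in> Z then One else Zero) [0..<n]"

definition ones :: "sym list \<Rightarrow> nat set" where
  "ones w = {i. i < length w \<and> w ! i = One}"

lemma length_mk [simp]: "length (mk n c Z) = n"
  by (simp add: mk_def)

lemma nth_mk: "i < n \<Longrightarrow> mk n c Z ! i = (if i = c then Star else if i \<in> Z then One else Zero)"
  by (simp add: mk_def)

lemma mk_in_X: "c < n \<Longrightarrow> mk n c Z \<in> X n"
proof -
  assume c: "c < n"
  have "{i. i < n \<and> mk n c Z ! i = Star} = {c}" using c by (auto simp: nth_mk split: if_splits)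
  then show ?thesis by (simp add: X_def)
qed

lemma X_star:
  assumes "w \<in> X n"
  obtains c where "c < n" "w ! c = Star" "\<And>i. i < n \<Longrightarrow> w ! i = Star \<Longrightarrow> i = c"
proof -
  have "card {i. i < n \<and> w ! i = Star} = 1" using assms by (simp add: X_def)
  then obtain c where c: "{i. i < n \<and> w ! i = Star} = {c}" by (rule card_1_singletonE)
  then have "c < n" "w ! c = Star" "\<And>i. i < n \<Longrightarrow> w!i = Star \<Longrightarrow> i = c" by blast+
  then show ?thesis by (rule that)
qed

lemma X_mk:
  assumes "w \<in> X n"
  obtains c where "c < n" "c \<notin> ones w" "ones w \<subseteq> {..<n}" "w = mk n c (ones w)"
proof -
  obtain c where c: "c < n" "w ! c = Star" "\<And>i. i < n \<Longrightarrow> w ! i = Star \<Longrightarrow> i = c"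
    by (rule X_star[OF assms]) (rule that, assumption+)
  have len: "length w = n" using assms by (simp add: X_def)
  have "w = mk n c (ones w)"
  proof (rule nth_equalityI)
    show "length w = length (mk n c (ones w))" using len by simp
    fix i assume "i < length w"
    then have i: "i < n" using len by simp
    show "w ! i = mk n c (ones w) ! i"
    proof (cases "w ! i")
      case Star
      then have "i = c" using c(3)[OF i] by simp
      then show ?thesis using Star i by (simp add: nth_mk)
    next
      case Zero
      then have "i \<noteq> c" using c(2) by auto
      then show ?thesis using Zero i len by (simp add: nth_mk ones_def)
    next
      case One
      then have "i \<noteq> c" using c(2) by auto
      then show ?thesis using One i len by (simp add: nth_mk ones_def)
    qed
  qed
  moreover have "c \<notin> ones w" using c(2) len by (simp add: ones_def)
  moreover have "ones w \<subseteq> {..<n}" using len by (auto simp: ones_def)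
  ultimately show ?thesis using that c by blast
qed

lemma mk_eq_iff:
  assumes "c < n" "d < n" "c \<notin> Z" "d \<notin> Y" "Z \<subseteq> {..<n}" "Y \<subseteq> {..<n}"
  shows "mk n c Z = mk n d Y \<longleftrightarrow> c = d \<and> Z = Y"
proof
  assume eq: "mk n c Z = mk n d Y"
  have "mk n c Z ! c = Star" using assms by (simp add: nth_mk)
  then have "mk n d Y ! c = Star" using eq by simp
  then have cd: "c = d" using assms by (cases "c = d") (auto simp: nth_mk split: if_splits)
  have "Z = Y"
  proof (rule set_eqI)
    fix i
    show "i \<in> Z \<longleftrightarrow> i \<in> Y"
    proof (cases "i < n")
      case True
      then have "mk n c Z ! i = mk n d Y ! i" using eq by simp
      then show ?thesis using True cd assms by (cases "i = c") (auto simp: nth_mk split: if_splits)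
    next
      case False
      then show ?thesis using assms by auto
    qed
  qed
  then show "c = d \<and> Z = Y" using cd by simp
qed simp

lemma ham_mk:
  assumes "c < n" "d < n" "c \<notin> Z" "d \<notin> Y" "Z \<subseteq> {..<n}" "Y \<subseteq> {..<n}"
  shows "hamming (mk n c Z) (mk n d Y) =
         card (if c = d then (Z - Y) \<union> (Y - Z) else insert c (insert d ((Z - Y) \<union> (Y - Z))))"
proof -
  have key: "mk n c Z ! i \<noteq> mk n d Y ! i \<longleftrightarrow>
      (if c = d then i \<in> (Z - Y) \<union> (Y - Z) else i \<in> insert c (insert d ((Z - Y) \<union> (Y - Z))))"
    if i: "i < n" for i
  proof (cases "c = d")
    case True
    then show ?thesis using i assms by (auto simp add: nth_mk)
  next
    case False
    then show ?thesis using i assms by (auto simp add: nth_mk)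
  qed
  have sub: "(if c = d then (Z - Y) \<union> (Y - Z) else insert c (insert d ((Z - Y) \<union> (Y - Z)))) \<subseteq> {..<n}"
    using assms by auto
  have "{i. i < length (mk n c Z) \<and> mk n c Z ! i \<noteq> mk n d Y ! i} =
        (if c = d then (Z - Y) \<union> (Y - Z) else insert c (insert d ((Z - Y) \<union> (Y - Z))))"
  proof (rule set_eqI)
    fix i
    show "i \<in> {i. i < length (mk n c Z) \<and> mk n c Z ! i \<noteq> mk n d Y ! i} \<longleftrightarrow>
        i \<in> (if c = d then (Z - Y) \<union> (Y - Z) else insert c (insert d ((Z - Y) \<union> (Y - Z))))"
    proof (cases "i < n")
      case True
      then show ?thesis using key[OF True] by (cases "c = d") simp_all
    next
      case False
      then show ?thesis using sub by auto
    qed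
  qed
  then show ?thesis by (simp add: hamming_def)
qed

lemma permutes_fix_remove:
  assumes "q permutes S" "q a = a"
  shows "q permutes (S - {a})"
  using assms unfolding permutes_def by auto

lemma card_perm_step:
  assumes "finite S" "a \<in> S" "b \<in> S"
  shows "card {p. p permutes S \<and> p a = b \<and> Q p} =
         card {q. q permutes (S - {a}) \<and> Q (Transposition.transpose a b \<circ> q)}"
proof -
  let ?t = "Transposition.transpose a b"
  have tt: "\<And>f. ?t \<circ> (?t \<circ> f) = f" by (auto simp: fun_eq_iff)
  have h1: "?t \<circ> q permutes S \<and> (?t \<circ> q) a = b" if q: "q permutes S - {a}" for q
  proof
    have "q permutes S" using permutes_subset[OF q] by auto
    then show "?t \<circ> q permutes S" by (rule permutes_compose[OF _ permutes_swap_id[OF assms(2,3)]])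
    have "q a = a" using permutes_not_in[OF q] by auto
    then show "(?t \<circ> q) a = b" by simp
  qed
  have h2: "?t \<circ> p permutes S - {a}" if p: "p permutes S" "p a = b" for p
  proof (rule permutes_fix_remove)
    show "?t \<circ> p permutes S" by (rule permutes_compose[OF p(1) permutes_swap_id[OF assms(2,3)]])
    show "(?t \<circ> p) a = a" using p by simp
  qed
  have "bij_betw (\<lambda>q. ?t \<circ> q) {q. q permutes (S - {a}) \<and> Q (?t \<circ> q)} {p. p permutes S \<and> p a = b \<and> Q p}"
  proof (rule bij_betw_byWitness[where f' = "\<lambda>p. ?t \<circ> p"])
    show "\<forall>q\<in>{q. q permutes S - {a} \<and> Q (?t \<circ> q)}. ?t \<circ> (?t \<circ> q) = q" using tt by blast
    show "\<forall>p\<in>{p. p permutes S \<and> p a = b \<and> Q p}. ?t \<circ> (?t \<circ> p) = p" using tt by blast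
    show "(\<lambda>q. ?t \<circ> q) ` {q. q permutes S - {a} \<and> Q (?t \<circ> q)} \<subseteq> {p. p permutes S \<and> p a = b \<and> Q p}"
      using h1 by blast
    show "(\<lambda>p. ?t \<circ> p) ` {p. p permutes S \<and> p a = b \<and> Q p} \<subseteq> {q. q permutes S - {a} \<and> Q (?t \<circ> q)}"
    proof
      fix x assume "x \<in> (\<lambda>p. ?t \<circ> p) ` {p. p permutes S \<and> p a = b \<and> Q p}"
      then obtain p where p: "p permutes S" "p a = b" "Q p" and x: "x = ?t \<circ> p" by blast
      have "?t \<circ> x = p" using x tt by simp
      then show "x \<in> {q. q permutes S - {a} \<and> Q (?t \<circ> q)}" using h2[OF p(1,2)] p(3) x by simp
    qed
  qed
  then show ?thesis by (simp add: bij_betw_same_card)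
qed
lemma card_perm_fixed:
  assumes "finite S" "distinct as" "distinct bs" "length as = length bs"
    "set as \<subseteq> S" "set bs \<subseteq> S"
  shows "card {p. p permutes S \<and> (\<forall>j<length as. p (as!j) = bs!j)} = fact (card S - length as)"
  using assms
proof (induction as arbitrary: bs S)
  case Nil
  then show ?case using card_permutations[OF refl Nil(1)] by simp
next
  case (Cons a as)
  then obtain b bs' where bs: "bs = b # bs'" by (cases bs) auto
  let ?t = "Transposition.transpose a b"
  have aS: "a \<in> S" and bS: "b \<in> S" using Cons.prems bs by auto
  have "{p. p permutes S \<and> (\<forall>j<length (a#as). p ((a#as)!j) = bs!j)} =
        {p. p permutes S \<and> p a = b \<and> (\<forall>j<length as. p (as!j) = bs'!j)}"
    using bs by (simp add: All_less_Suc2)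
  also have "card \<dots> = card {q. q permutes (S - {a}) \<and> (\<forall>j<length as. (?t \<circ> q) (as!j) = bs'!j)}"
    by (rule card_perm_step[OF Cons.prems(1) aS bS])
  also have "{q. q permutes (S - {a}) \<and> (\<forall>j<length as. (?t \<circ> q) (as!j) = bs'!j)} =
             {q. q permutes (S - {a}) \<and> (\<forall>j<length as. q (as!j) = (map ?t bs')!j)}"
  proof -
    have "\<And>q j. j < length as \<Longrightarrow> ((?t \<circ> q) (as!j) = bs'!j) = (q (as!j) = (map ?t bs')!j)"
    proof -
      fix q j assume j: "j < length as"
      have inv: "\<And>x y. (?t x = y) = (x = ?t y)" by (metis transpose_involutory)
      show "((?t \<circ> q) (as!j) = bs'!j) = (q (as!j) = (map ?t bs')!j)"
        using j Cons.prems bs inv[of "q (as!j)" "bs'!j"] by (simp add: nth_map)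
    qed
    then show ?thesis by blast
  qed
  also have "card \<dots> = fact (card (S - {a}) - length as)"
  proof (rule Cons.IH)
    show "finite (S - {a})" using Cons.prems by auto
    show "distinct as" using Cons.prems by auto
    show "distinct (map ?t bs')" using Cons.prems bs by (simp add: distinct_map)
    show "length as = length (map ?t bs')" using Cons.prems bs by simp
    show "set as \<subseteq> S - {a}" using Cons.prems by auto
    show "set (map ?t bs') \<subseteq> S - {a}"
    proof
      fix y assume "y \<in> set (map ?t bs')"
      then obtain c where c: "c \<in> set bs'" "y = ?t c" by auto
      have "c \<noteq> b" using Cons.prems bs c by auto
      moreover have "c \<in> S" using Cons.prems bs c by auto
      ultimately show "y \<in> S - {a}" using c aS bS by (auto simp: transpose_def)
    qed
  qed
  finally have eq: "card {p. p permutes S \<and> (\<forall>j<length (a#as). p ((a#as)!j) = bs!j)} = fact (card (S - {a}) - length as)" .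
  have ar: "card (S - {a}) - length as = card S - length (a#as)"
    using card_Diff_singleton[OF aS] by simp
  show ?case unfolding ar[symmetric] by (rule eq)
qed

lemma hamming_le:
  assumes "length u' = length u" "\<And>j. j < length u \<Longrightarrow> u' ! j \<noteq> v' ! j \<Longrightarrow> u ! j \<noteq> v ! j"
  shows "hamming u' v' \<le> hamming u v"
  unfolding hamming_def
  by (rule card_mono) (use assms in auto)

definition sh :: "nat \<Rightarrow> sym list set \<Rightarrow> sym list \<Rightarrow> sym list" where
  "sh i B w = (if w ! i = One \<and> w[i := Zero] \<notin> B then w[i := Zero] else w)"

lemma sh_ch: "w ! i = One \<and> w[i := Zero] \<notin> B \<Longrightarrow> sh i B w = w[i := Zero]"
  unfolding sh_def by (rule if_P)

lemma sh_same: "\<not> (w ! i = One \<and> w[i := Zero] \<notin> B) \<Longrightarrow> sh i B w = w"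
  unfolding sh_def by (rule if_not_P)

lemma sh_in_X:
  assumes "w \<in> X n" "i < n"
  shows "sh i B w \<in> X n"
proof (cases "w ! i = One \<and> w[i := Zero] \<notin> B")
  case True
  have len: "length w = n" using assms by (simp add: X_def)
  have "{j. j < n \<and> w[i := Zero] ! j = Star} = {j. j < n \<and> w ! j = Star}"
    using True len assms(2) by (auto simp: nth_list_update)
  then show ?thesis using True assms len by (simp add: sh_def X_def)
next
  case False
  then have "sh i B w = w" by (auto simp: sh_def)
  then show ?thesis using assms by simp
qed

lemma sh_inj:
  assumes "\<forall>w\<in>B. length w = n" "i < n"
  shows "inj_on (sh i B) B"
proof (rule inj_onI)
  fix u v assume u: "u \<in> B" and v: "v \<in> B" and eq: "sh i B u = sh i B v"
  show "u = v"
  proof (cases "u ! i = One \<and> u[i := Zero] \<notin> B"; cases "v ! i = One \<and> v[i := Zero] \<notin> B")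
    assume cu: "u ! i = One \<and> u[i := Zero] \<notin> B" and cv: "v ! i = One \<and> v[i := Zero] \<notin> B"
    have e: "u[i := Zero] = v[i := Zero]" using eq unfolding sh_ch[OF cu] sh_ch[OF cv] .
    have lu: "length u = n" and lv: "length v = n" using assms u v by auto
    show "u = v"
    proof (rule nth_equalityI)
      show "length u = length v" using lu lv by simp
      fix j assume j: "j < length u"
      show "u ! j = v ! j"
      proof (cases "j = i")
        case True then show ?thesis using cu cv by metis
      next
        case False
        have "u[i := Zero] ! j = v[i := Zero] ! j" using e by simp
        then show ?thesis using False by (metis nth_list_update_neq)
      qed
    qed
  next
    assume cu: "u ! i = One \<and> u[i := Zero] \<notin> B" and cv: "\<not> (v ! i = One \<and> v[i := Zero] \<notin> B)"
    have "sh i B u = u[i := Zero]" "sh i B v = v" using sh_ch[OF cu] sh_same[OF cv] .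
    then have "u[i := Zero] = v" using eq by metis
    then show "u = v" using cu v by blast
  next
    assume cu: "\<not> (u ! i = One \<and> u[i := Zero] \<notin> B)" and cv: "v ! i = One \<and> v[i := Zero] \<notin> B"
    have "sh i B u = u" "sh i B v = v[i := Zero]" using sh_same[OF cu] sh_ch[OF cv] .
    then have "u = v[i := Zero]" using eq by metis
    then show "u = v" using cv u by blast
  next
    assume cu: "\<not> (u ! i = One \<and> u[i := Zero] \<notin> B)" and cv: "\<not> (v ! i = One \<and> v[i := Zero] \<notin> B)"
    have "sh i B u = u" "sh i B v = v" using sh_same[OF cu] sh_same[OF cv] .
    then show "u = v" using eq by metis
  qed
qed

lemma sh_diam:
  assumes B: "\<forall>w\<in>B. length w = n" and i: "i < n"
    and d: "\<forall>u\<in>B. \<forall>v\<in>B. hamming u v \<le> 4"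
    and u0: "u0 \<in> B" and v0: "v0 \<in> B"
  shows "hamming (sh i B u0) (sh i B v0) \<le> 4"
proof -
  have lu: "length u0 = n" and lv: "length v0 = n" using B u0 v0 by auto
  have du: "\<And>w. length w = n \<Longrightarrow> j < n \<Longrightarrow> w[i := Zero] ! j = (if j = i then Zero else w ! j)" for j
    using i by (simp add: nth_list_update)
  show ?thesis
  proof (cases "u0 ! i = One \<and> u0[i := Zero] \<notin> B"; cases "v0 ! i = One \<and> v0[i := Zero] \<notin> B")
    assume cu: "u0 ! i = One \<and> u0[i := Zero] \<notin> B" and cv: "v0 ! i = One \<and> v0[i := Zero] \<notin> B"
    have s: "sh i B u0 = u0[i := Zero]" "sh i B v0 = v0[i := Zero]" using sh_ch[OF cu] sh_ch[OF cv] .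
    have "hamming (u0[i := Zero]) (v0[i := Zero]) \<le> hamming u0 v0"
    proof (rule hamming_le)
      show "length (u0[i := Zero]) = length u0" by simp
      fix j assume j: "j < length u0" "u0[i := Zero] ! j \<noteq> v0[i := Zero] ! j"
      then show "u0 ! j \<noteq> v0 ! j" using du[OF lu, of j] du[OF lv, of j] lu by (cases "j = i") auto
    qed
    moreover have "hamming u0 v0 \<le> 4" using d u0 v0 by blast
    ultimately show ?thesis unfolding s by linarith
  next
    assume cu: "u0 ! i = One \<and> u0[i := Zero] \<notin> B" and cv: "\<not> (v0 ! i = One \<and> v0[i := Zero] \<notin> B)"
    have s: "sh i B u0 = u0[i := Zero]" "sh i B v0 = v0" using sh_ch[OF cu] sh_same[OF cv] .
    show ?thesis
    proof (cases "v0 ! i = One")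
      case True
      then have vin: "v0[i := Zero] \<in> B" using cv by simp
      have "hamming (u0[i := Zero]) v0 \<le> hamming u0 (v0[i := Zero])"
      proof (rule hamming_le)
        show "length (u0[i := Zero]) = length u0" by simp
        fix j assume j: "j < length u0" "u0[i := Zero] ! j \<noteq> v0 ! j"
        then show "u0 ! j \<noteq> v0[i := Zero] ! j" using du[OF lu, of j] du[OF lv, of j] lu cu by (cases "j = i") auto
      qed
      moreover have "hamming u0 (v0[i := Zero]) \<le> 4" using d u0 vin by blast
      ultimately show ?thesis unfolding s by linarith
    next
      case False
      have "hamming (u0[i := Zero]) v0 \<le> hamming u0 v0"
      proof (rule hamming_le)
        show "length (u0[i := Zero]) = length u0" by simp
        fix j assume j: "j < length u0" "u0[i := Zero] ! j \<noteq> v0 ! j"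
        then show "u0 ! j \<noteq> v0 ! j" using du[OF lu, of j] lu cu False by (cases "j = i") auto
      qed
      moreover have "hamming u0 v0 \<le> 4" using d u0 v0 by blast
      ultimately show ?thesis unfolding s by linarith
    qed
  next
    assume cu: "\<not> (u0 ! i = One \<and> u0[i := Zero] \<notin> B)" and cv: "v0 ! i = One \<and> v0[i := Zero] \<notin> B"
    have s: "sh i B u0 = u0" "sh i B v0 = v0[i := Zero]" using sh_same[OF cu] sh_ch[OF cv] .
    show ?thesis
    proof (cases "u0 ! i = One")
      case True
      then have uin: "u0[i := Zero] \<in> B" using cu by simp
      have "hamming u0 (v0[i := Zero]) \<le> hamming (u0[i := Zero]) v0"
      proof (rule hamming_le)
        show "length u0 = length (u0[i := Zero])" by simp
        fix j assume j: "j < length (u0[i := Zero])" "u0 ! j \<noteq> v0[i := Zero] ! j"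
        then show "u0[i := Zero] ! j \<noteq> v0 ! j" using du[OF lu, of j] du[OF lv, of j] lu cv by (cases "j = i") auto
      qed
      moreover have "hamming (u0[i := Zero]) v0 \<le> 4" using d uin v0 by blast
      ultimately show ?thesis unfolding s by linarith
    next
      case False
      have "hamming u0 (v0[i := Zero]) \<le> hamming u0 v0"
      proof (rule hamming_le)
        show "length u0 = length u0" by simp
        fix j assume j: "j < length u0" "u0 ! j \<noteq> v0[i := Zero] ! j"
        then show "u0 ! j \<noteq> v0 ! j" using du[OF lv, of j] lu cv False by (cases "j = i") auto
      qed
      moreover have "hamming u0 v0 \<le> 4" using d u0 v0 by blast
      ultimately show ?thesis unfolding s by linarith
    qed
  next
    assume cu: "\<not> (u0 ! i = One \<and> u0[i := Zero] \<notin> B)" and cv: "\<not> (v0 ! i = One \<and> v0[i := Zero] \<notin> B)"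
    have s: "sh i B u0 = u0" "sh i B v0 = v0" using sh_same[OF cu] sh_same[OF cv] .
    then show ?thesis using d u0 v0 by metis
  qed
qed

definition wt :: "sym list \<Rightarrow> nat" where "wt w = card (ones w)"

lemma sh_wt_le: "wt (sh i B w) \<le> wt w"
proof (cases "w ! i = One \<and> w[i := Zero] \<notin> B")
  case True
  have "ones (w[i := Zero]) \<subseteq> ones w"
  proof (cases "i < length w")
    case True then show ?thesis by (auto simp: ones_def nth_list_update split: if_splits)
  next
    case False then show ?thesis by (simp add: list_update_beyond)
  qed
  then show ?thesis using True by (simp add: sh_def wt_def card_mono ones_def)
next
  case False then show ?thesis by (auto simp: sh_def)
qed

lemma sh_wt_less:
  assumes "i < length w" "w ! i = One" "w[i := Zero] \<notin> B"
  shows "wt (sh i B w) < wt w"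
proof -
  have "ones (w[i := Zero]) = ones w - {i}" using assms by (auto simp: ones_def nth_list_update split: if_splits)
  moreover have "i \<in> ones w" using assms by (simp add: ones_def)
  moreover have "finite (ones w)" by (simp add: ones_def)
  ultimately have "card (ones (w[i := Zero])) < card (ones w)"
    by (metis card_Diff1_less)
  then show ?thesis using assms by (simp add: sh_def wt_def)
qed

lemma finite_X: "finite (X n)"
proof -
  have "X n \<subseteq> {xs. set xs \<subseteq> {Star, Zero, One} \<and> length xs = n}"
  proof
    fix w assume "w \<in> X n"
    moreover have "set w \<subseteq> {Star, Zero, One}"
    proof
      fix x assume "x \<in> set w" show "x \<in> {Star, Zero, One}" by (cases x) simp_all
    qed
    ultimately show "w \<in> {xs. set xs \<subseteq> {Star, Zero, One} \<and> length xs = n}" by (simp add: X_def)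
  qed
  moreover have "finite {xs. set xs \<subseteq> {Star, Zero, One} \<and> length xs = n}"
    by (rule finite_lists_length_eq) simp
  ultimately show ?thesis by (rule finite_subset)
qed

lemma exists_downclosed:
  assumes "B \<subseteq> X n" "\<forall>u\<in>B. \<forall>v\<in>B. hamming u v \<le> 4"
  obtains C where "C \<subseteq> X n" "card C = card B" "\<forall>u\<in>C. \<forall>v\<in>C. hamming u v \<le> 4"
    "\<forall>w\<in>C. \<forall>i<n. w ! i = One \<longrightarrow> w[i := Zero] \<in> C"
proof -
  define P where "P = (\<lambda>C. C \<subseteq> X n \<and> card C = card B \<and> (\<forall>u\<in>C. \<forall>v\<in>C. hamming u v \<le> 4))"
  define W where "W = (\<lambda>C. \<Sum>w\<in>C. wt w)"
  have "P B" using assms by (simp add: P_def)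
  then obtain C where PC: "P C" and min: "\<And>C'. P C' \<Longrightarrow> W C \<le> W C'"
    using ex_has_least_nat[of P B W] by blast
  have CX: "C \<subseteq> X n" and cC: "card C = card B" and dC: "\<forall>u\<in>C. \<forall>v\<in>C. hamming u v \<le> 4"
    using PC by (auto simp: P_def)
  have fin: "finite C" using CX finite_X finite_subset by blast
  have len: "\<forall>w\<in>C. length w = n" using CX by (auto simp: X_def)
  have dc: "\<forall>w\<in>C. \<forall>i<n. w ! i = One \<longrightarrow> w[i := Zero] \<in> C"
  proof (rule ccontr)
    assume "\<not> (\<forall>w\<in>C. \<forall>i<n. w ! i = One \<longrightarrow> w[i := Zero] \<in> C)"
    then obtain w i where w: "w \<in> C" "i < n" "w ! i = One" "w[i := Zero] \<notin> C" by blast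
    let ?C' = "sh i C ` C"
    have inj: "inj_on (sh i C) C" by (rule sh_inj[OF len w(2)])
    have "P ?C'"
      unfolding P_def
    proof (intro conjI)
      show "?C' \<subseteq> X n" using sh_in_X[OF _ w(2)] CX by blast
      show "card ?C' = card B" using card_image[OF inj] cC by simp
      show "\<forall>u\<in>?C'. \<forall>v\<in>?C'. hamming u v \<le> 4" using sh_diam[OF len w(2) dC] by blast
    qed
    then have le: "W C \<le> W ?C'" by (rule min)
    have "W ?C' = (\<Sum>x\<in>C. wt (sh i C x))" unfolding W_def by (rule sum.reindex_cong[OF inj refl refl])
    also have "\<dots> < (\<Sum>x\<in>C. wt x)"
    proof (rule sum_strict_mono_ex1[OF fin])
      show "\<forall>x\<in>C. wt (sh i C x) \<le> wt x" using sh_wt_le by blast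
      have "i < length w" using len w by auto
      then show "\<exists>x\<in>C. wt (sh i C x) < wt x" using sh_wt_less[of i w C] w by blast
    qed
    finally show False using le unfolding W_def by linarith
  qed
  show ?thesis by (rule that[OF CX cC dC dc])
qed

lemma update_mk:
  assumes "i < n" "i \<noteq> c"
  shows "(mk n c Z)[i := Zero] = mk n c (Z - {i})"
proof (rule nth_equalityI)
  show "length ((mk n c Z)[i := Zero]) = length (mk n c (Z - {i}))" by simp
  fix j assume "j < length ((mk n c Z)[i := Zero])"
  then have j: "j < n" by simp
  show "(mk n c Z)[i := Zero] ! j = mk n c (Z - {i}) ! j"
    using assms j by (cases "j = i") (simp_all add: nth_mk nth_list_update)
qed

lemma downclosed_mk:
  assumes dc: "\<forall>w\<in>C. \<forall>i<n. w ! i = One \<longrightarrow> w[i := Zero] \<in> C"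
    and "mk n c Z \<in> C" "c < n" "c \<notin> Z" "Z \<subseteq> {..<n}" "Y \<subseteq> Z"
  shows "mk n c Y \<in> C"
proof -
  have "\<forall>Z. mk n c Z \<in> C \<longrightarrow> c \<notin> Z \<longrightarrow> Z \<subseteq> {..<n} \<longrightarrow> Y \<subseteq> Z \<longrightarrow> card (Z - Y) = k \<longrightarrow> mk n c Y \<in> C" for k
  proof (induction k)
    case 0
    show ?case
    proof (intro allI impI)
      fix Z assume Z: "mk n c Z \<in> C" "c \<notin> Z" "Z \<subseteq> {..<n}" "Y \<subseteq> Z" "card (Z - Y) = 0"
      have "finite (Z - Y)" using Z(3) finite_subset by blast
      then have "Z - Y = {}" using Z(5) by simp
      then have "Z = Y" using Z(4) by blast
      then show "mk n c Y \<in> C" using Z(1) by simp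
    qed
  next
    case (Suc k)
    show ?case
    proof (intro allI impI)
      fix Z assume Z: "mk n c Z \<in> C" "c \<notin> Z" "Z \<subseteq> {..<n}" "Y \<subseteq> Z" "card (Z - Y) = Suc k"
      have "Z - Y \<noteq> {}" using Z(5) by (metis card.empty nat.distinct(1))
      then obtain i where i: "i \<in> Z - Y" by blast
      have iin: "i < n" "i \<noteq> c" using i Z by auto
      have "(mk n c Z) ! i = One" using iin i by (simp add: nth_mk)
      then have "(mk n c Z)[i := Zero] \<in> C" using dc Z(1) iin by blast
      then have m: "mk n c (Z - {i}) \<in> C" using update_mk[OF iin] by simp
      have "finite (Z - Y)" using Z(3) finite_subset by blast
      have e: "(Z - {i}) - Y = (Z - Y) - {i}" by blast
      have "card ((Z - Y) - {i}) = k" using card_Diff_singleton[OF i] Z(5) by simp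
      then have ck: "card ((Z - {i}) - Y) = k" using e by simp
      have "c \<notin> Z - {i}" "Z - {i} \<subseteq> {..<n}" "Y \<subseteq> Z - {i}" using Z i by auto
      then show "mk n c Y \<in> C" using Suc.IH m ck by blast
    qed
  qed
  from this[of "card (Z - Y)"] show ?thesis using assms by blast
qed

lemma bound_b:
  assumes CX: "C \<subseteq> X n" and dC: "\<forall>u\<in>C. \<forall>v\<in>C. hamming u v \<le> 4"
    and dc: "\<forall>w\<in>C. \<forall>i<n. w ! i = One \<longrightarrow> w[i := Zero] \<in> C"
    and w0: "w0 \<in> C" and big: "3 \<le> card (ones w0)" and n4: "4 \<le> n"
  shows "card C \<le> 8 * n"
proof -
  obtain c0 where c0: "c0 < n" "c0 \<notin> ones w0" "ones w0 \<subseteq> {..<n}" "w0 = mk n c0 (ones w0)"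
    using X_mk[of w0 n] CX w0 by blast
  obtain Z0 where Z0: "Z0 \<subseteq> ones w0" "card Z0 = 3" "finite Z0"
    using obtain_subset_with_card_n[OF big] by blast
  have Z0n: "Z0 \<subseteq> {..<n}" and c0Z0: "c0 \<notin> Z0" using Z0 c0 by auto
  have m0: "mk n c0 Z0 \<in> C" using downclosed_mk[OF dc, of c0 "ones w0" Z0] c0 w0 Z0 by simp
  have cZ4: "card (insert c0 Z0) = 4" using Z0 c0Z0 by simp
  define R where "R = {..<n} - insert c0 Z0"
  have cR: "card R = n - 4"
  proof -
    have "insert c0 Z0 \<subseteq> {..<n}" using Z0n c0 by auto
    then have "card R = card {..<n} - card (insert c0 Z0)" unfolding R_def
      by (rule card_Diff_subset[rotated]) (use Z0 in simp)
    then show ?thesis using cZ4 by simp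
  qed
  have finR: "finite R" unfolding R_def by simp
  define Q1 where "Q1 = (\<lambda>(A, S). mk n c0 (A \<union> S)) ` (Pow Z0 \<times> insert {} ((\<lambda>x. {x}) ` R))"
  define Q2 where "Q2 = (\<lambda>(c, Y). mk n c Y) ` (SIGMA c:Z0. Pow (insert c0 Z0 - {c}))"
  have sub: "C \<subseteq> Q1 \<union> Q2"
  proof
    fix w assume w: "w \<in> C"
    obtain c where c: "c < n" "c \<notin> ones w" "ones w \<subseteq> {..<n}" "w = mk n c (ones w)"
      using X_mk[of w n] CX w by blast
    define Y where "Y = ones w"
    have Yn: "Y \<subseteq> {..<n}" and cY: "c \<notin> Y" and wY: "w = mk n c Y" using c by (auto simp: Y_def)
    have finY: "finite Y" using Yn finite_subset by blast
    show "w \<in> Q1 \<union> Q2"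
    proof (cases "c = c0")
      case True
      have mY: "mk n c0 (Y - Z0) \<in> C" using downclosed_mk[OF dc, of c0 Y "Y - Z0"] w wY True c Yn cY by auto
      have h: "hamming (mk n c0 Z0) (mk n c0 (Y - Z0)) \<le> 4" using dC m0 mY by blast
      have "hamming (mk n c0 Z0) (mk n c0 (Y - Z0)) = card ((Z0 - (Y - Z0)) \<union> ((Y - Z0) - Z0))"
        using ham_mk[of c0 n c0 Z0 "Y - Z0"] c0 c0Z0 Z0n Yn True cY by auto
      also have "(Z0 - (Y - Z0)) \<union> ((Y - Z0) - Z0) = Z0 \<union> (Y - Z0)" by blast
      also have "card (Z0 \<union> (Y - Z0)) = 3 + card (Y - Z0)"
        using card_Un_disjoint[of Z0 "Y - Z0"] Z0 finY by auto
      finally have cle: "card (Y - Z0) \<le> 1" using h by simp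
      have YR: "Y - Z0 \<subseteq> R" using Yn cY True unfolding R_def by auto
      have "Y - Z0 \<in> insert {} ((\<lambda>x. {x}) ` R)"
      proof (cases "Y - Z0 = {}")
        case True then show ?thesis by simp
      next
        case False
        then have "card (Y - Z0) = 1" using cle finY by (metis One_nat_def card_0_eq finite_Diff le_Suc_eq le_zero_eq)
        then obtain x where "Y - Z0 = {x}" by (rule card_1_singletonE)
        then show ?thesis using YR by auto
      qed
      moreover have "Y \<inter> Z0 \<in> Pow Z0" by simp
      moreover have "w = mk n c0 ((Y \<inter> Z0) \<union> (Y - Z0))" using wY True by (simp add: Int_Diff_Un)
      ultimately have "w \<in> Q1" unfolding Q1_def by (auto intro!: image_eqI[where x = "(Y \<inter> Z0, Y - Z0)"])
      then show ?thesis by simp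
    next
      case False
      have m1: "mk n c {} \<in> C" using downclosed_mk[OF dc, of c Y "{}"] w wY c Yn cY by auto
      have "hamming (mk n c0 Z0) (mk n c {}) = card (insert c0 (insert c ((Z0 - {}) \<union> ({} - Z0))))"
        using ham_mk[of c0 n c Z0 "{}"] c0 c0Z0 Z0n c False by auto
      also have "\<dots> = card (insert c (insert c0 Z0))" by (simp add: insert_commute)
      finally have h1: "card (insert c (insert c0 Z0)) \<le> 4" using dC m0 m1 by (metis)
      have cZ: "c \<in> Z0"
      proof (rule ccontr)
        assume "c \<notin> Z0"
        then have "c \<notin> insert c0 Z0" using False by simp
        then have "card (insert c (insert c0 Z0)) = 5" using cZ4 Z0 by simp
        then show False using h1 by simp
      qed
      define Y' where "Y' = Y - insert c0 Z0"
      have mY': "mk n c Y' \<in> C" using downclosed_mk[OF dc, of c Y Y'] w wY c Yn cY unfolding Y'_def by auto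
      have "hamming (mk n c0 Z0) (mk n c Y') = card (insert c0 (insert c ((Z0 - Y') \<union> (Y' - Z0))))"
        using ham_mk[of c0 n c Z0 Y'] c0 c0Z0 Z0n c False Yn cY unfolding Y'_def by auto
      also have "insert c0 (insert c ((Z0 - Y') \<union> (Y' - Z0))) = insert c0 Z0 \<union> Y'"
        using cZ unfolding Y'_def by blast
      also have "card (insert c0 Z0 \<union> Y') = 4 + card Y'"
        using card_Un_disjoint[of "insert c0 Z0" Y'] Z0 finY cZ4 unfolding Y'_def by auto
      finally have "card Y' = 0" using dC m0 mY' by (metis add_le_same_cancel1 le_zero_eq)
      then have "Y' = {}" using finY unfolding Y'_def by simp
      then have "Y \<in> Pow (insert c0 Z0 - {c})" using cY unfolding Y'_def by auto
      then have "w \<in> Q2" unfolding Q2_def using cZ wY by (auto intro!: image_eqI[where x = "(c, Y)"])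
      then show ?thesis by simp
    qed
  qed
  have finC: "finite C" using CX finite_X finite_subset by blast
  have "card C \<le> card (Q1 \<union> Q2)"
    by (rule card_mono[OF _ sub]) (simp add: Q1_def Q2_def Z0 finR)
  also have "\<dots> \<le> card Q1 + card Q2" by (rule card_Un_le)
  also have "card Q1 \<le> 8 * (n - 3)"
  proof -
    have "card Q1 \<le> card (Pow Z0 \<times> insert {} ((\<lambda>x. {x}) ` R))" unfolding Q1_def by (rule card_image_le) (simp add: Z0 finR)
    also have "\<dots> = card (Pow Z0) * card (insert {} ((\<lambda>x. {x}) ` R))" by (rule card_cartesian_product)
    also have "card (Pow Z0) = 8" using card_Pow[of Z0] Z0 by simp
    also have "card (insert {} ((\<lambda>x. {x}) ` R)) \<le> n - 3"
    proof -
      have "card (insert {} ((\<lambda>x. {x}) ` R)) \<le> Suc (card ((\<lambda>x. {x}) ` R))" by (rule card_insert_le_m1) auto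
      moreover have "card ((\<lambda>x. {x}) ` R) \<le> card R" by (rule card_image_le[OF finR])
      ultimately show ?thesis using cR n4 by linarith
    qed
    finally show ?thesis by simp
  qed
  also have "card Q2 \<le> 24"
  proof -
    have "card Q2 \<le> card (SIGMA c:Z0. Pow (insert c0 Z0 - {c}))" unfolding Q2_def by (rule card_image_le) (simp add: Z0)
    also have "\<dots> = (\<Sum>c\<in>Z0. card (Pow (insert c0 Z0 - {c})))" using Z0 by simp
    also have "\<dots> = (\<Sum>c\<in>Z0. 8)"
    proof (rule sum.cong[OF refl])
      fix c assume "c \<in> Z0"
      then have "card (insert c0 Z0 - {c}) = 3" using cZ4 by simp
      then show "card (Pow (insert c0 Z0 - {c})) = 8" using card_Pow[of "insert c0 Z0 - {c}"] Z0 by simp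
    qed
    also have "\<dots> = 24" using Z0 by simp
    finally show ?thesis .
  qed
  finally show ?thesis using n4 by linarith
qed

lemma card_perm2:
  assumes "finite S" "a1 \<noteq> a2" "b1 \<noteq> b2" "a1 \<in> S" "a2 \<in> S" "b1 \<in> S" "b2 \<in> S"
  shows "card {p. p permutes S \<and> p a1 = b1 \<and> p a2 = b2} = fact (card S - 2)"
proof -
  have "{p. p permutes S \<and> p a1 = b1 \<and> p a2 = b2} =
        {p. p permutes S \<and> (\<forall>j<length [a1, a2]. p ([a1, a2] ! j) = [b1, b2] ! j)}"
    by (auto simp: All_less_Suc2)
  also have "card \<dots> = fact (card S - length [a1, a2])"
    by (rule card_perm_fixed) (use assms in auto)
  finally show ?thesis by (simp add: numeral_2_eq_2)
qed

lemma card_perm3: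
  assumes "finite S" "a1 \<noteq> a2" "a1 \<noteq> a3" "a2 \<noteq> a3" "b1 \<noteq> b2" "b1 \<noteq> b3" "b2 \<noteq> b3"
    "a1 \<in> S" "a2 \<in> S" "a3 \<in> S" "b1 \<in> S" "b2 \<in> S" "b3 \<in> S"
  shows "card {p. p permutes S \<and> p a1 = b1 \<and> p a2 = b2 \<and> p a3 = b3} = fact (card S - 3)"
proof -
  have "{p. p permutes S \<and> p a1 = b1 \<and> p a2 = b2 \<and> p a3 = b3} =
        {p. p permutes S \<and> (\<forall>j<length [a1, a2, a3]. p ([a1, a2, a3] ! j) = [b1, b2, b3] ! j)}"
    by (auto simp: All_less_Suc2)
  also have "card \<dots> = fact (card S - length [a1, a2, a3])"
    by (rule card_perm_fixed) (use assms in auto)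
  finally show ?thesis by (simp add: numeral_3_eq_3)
qed

definition sp :: "nat \<Rightarrow> nat \<Rightarrow> nat" where
  "sp k j = (if j = 0 then 0 else 2 * (j mod k) + 2)"

definition pp :: "nat \<Rightarrow> nat set" where
  "pp j = (if j = 0 then {1} else {2 * j, 2 * j + 1})"

definition rw :: "nat \<Rightarrow> nat \<Rightarrow> (nat \<Rightarrow> nat) \<Rightarrow> nat \<Rightarrow> sym list" where
  "rw n k p j = mk n (p (sp k j)) (p ` pp j)"

lemma sp_lt: "j \<le> k \<Longrightarrow> 0 < k \<Longrightarrow> sp k j \<le> 2 * k"
proof -
  assume j: "j \<le> k" and k: "0 < k"
  have "j mod k < k" using k by simp
  then show ?thesis by (simp add: sp_def)
qed

lemma pp_lt: "j \<le> k \<Longrightarrow> x \<in> pp j \<Longrightarrow> x \<le> 2 * k + 1"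
  by (auto simp: pp_def split: if_splits)

lemma sp_notin_pp: "j \<le> k \<Longrightarrow> 2 \<le> k \<Longrightarrow> sp k j \<notin> pp j"
proof -
  assume j: "j \<le> k" and k: "2 \<le> k"
  show ?thesis
  proof (cases "j = 0")
    case True then show ?thesis by (simp add: sp_def pp_def)
  next
    case False
    show ?thesis
    proof (cases "j = k")
      case True then show ?thesis using False k by (simp add: sp_def pp_def)
    next
      case False
      then have "j mod k = j" using j by simp
      then show ?thesis using \<open>j \<noteq> 0\<close> by (simp add: sp_def pp_def)
    qed
  qed
qed

lemma sp_inj: "j \<le> k \<Longrightarrow> j' \<le> k \<Longrightarrow> 1 \<le> k \<Longrightarrow> sp k j = sp k j' \<Longrightarrow> j = j'"
proof -
  assume j: "j \<le> k" and j': "j' \<le> k" and k: "1 \<le> k" and eq: "sp k j = sp k j'"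
  have md: "i \<le> k \<Longrightarrow> i \<noteq> 0 \<Longrightarrow> i mod k = (if i = k then 0 else i)" for i by auto
  show "j = j'"
  proof (cases "j = 0"; cases "j' = 0")
    assume "j \<noteq> 0" "j' \<noteq> 0"
    then have "j mod k = j' mod k" using eq by (simp add: sp_def)
    then show "j = j'" using md[OF j] md[OF j'] \<open>j \<noteq> 0\<close> \<open>j' \<noteq> 0\<close> by (auto split: if_splits)
  qed (use eq in \<open>auto simp: sp_def\<close>)
qed

lemma finite_pp [simp]: "finite (pp j)"
  by (simp add: pp_def)

lemma pp_disj: "j \<noteq> j' \<Longrightarrow> pp j \<inter> pp j' = {}"
  by (auto simp: pp_def)

lemma five_pos:
  assumes "j \<le> k" "j' \<le> k" "j \<noteq> j'" "3 \<le> k"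
  shows "5 \<le> card (insert (sp k j) (insert (sp k j') (pp j \<union> pp j')))"
proof -
  have fin: "finite (insert (sp k j) (insert (sp k j') (pp j \<union> pp j')))" by simp
  have nj: "sp k j \<notin> pp j" and nj': "sp k j' \<notin> pp j'" using sp_notin_pp assms by auto
  have sne: "sp k j \<noteq> sp k j'" using sp_inj[of j k j'] assms by auto
  have cpp: "card (pp j) + card (pp j') = card (pp j \<union> pp j')"
    using card_Un_disjoint[of "pp j" "pp j'"] pp_disj[OF assms(3)] by simp
  have key: "sp k j \<notin> pp j' \<or> sp k j' \<notin> pp j"
  proof (rule ccontr)
    assume "\<not> (sp k j \<notin> pp j' \<or> sp k j' \<notin> pp j)"
    then have a: "sp k j \<in> pp j'" and b: "sp k j' \<in> pp j" by auto
    have "j \<noteq> 0" using b by (auto simp: sp_def pp_def split: if_splits)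
    moreover have "j' \<noteq> 0" using a by (auto simp: sp_def pp_def split: if_splits)
    ultimately have a1: "2 * (j mod k) + 2 = 2 * j' \<or> 2 * (j mod k) + 2 = 2 * j' + 1"
      and b1: "2 * (j' mod k) + 2 = 2 * j \<or> 2 * (j' mod k) + 2 = 2 * j + 1"
      using a b by (auto simp: sp_def pp_def)
    have par: "\<And>x y::nat. 2*x+2 = 2*y \<or> 2*x+2 = 2*y+1 \<Longrightarrow> 2*x+2 = 2*y" by presburger
    have a': "2 * (j mod k) + 2 = 2 * j'" using par[OF a1] .
    have b': "2 * (j' mod k) + 2 = 2 * j" using par[OF b1] .
    have e1: "j mod k + 1 = j'" and e2: "j' mod k + 1 = j" using a' b' by auto
    have md: "i \<le> k \<Longrightarrow> i mod k = (if i = k then 0 else i)" for i by auto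
    show False
    proof (cases "j = k")
      case True
      then have "j' = 1" using e1 by simp
      then have "j = 2" using e2 assms(4) by simp
      then show False using True assms(4) by simp
    next
      case False
      then have "j' = j + 1" using e1 md[OF assms(1)] by simp
      show False
      proof (cases "j' = k")
        case True
        then have "j = 1" using e2 by simp
        then show False using True \<open>j' = j + 1\<close> assms(4) by simp
      next
        case False
        then have "j = j' + 1" using e2 md[OF assms(2)] by simp
        then show False using \<open>j' = j + 1\<close> by simp
      qed
    qed
  qed
  show ?thesis
  proof (cases "j = 0 \<or> j' = 0")
    case True
    then have "sp k j \<notin> pp j'" "sp k j' \<notin> pp j" using assms(3)
      by (auto simp: sp_def pp_def)
    then have o1: "sp k j \<notin> insert (sp k j') (pp j \<union> pp j')" and o2: "sp k j' \<notin> pp j \<union> pp j'"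
      using nj nj' sne by auto
    have "card (pp j \<union> pp j') = 3" using cpp True assms(3) by (auto simp: pp_def)
    then show ?thesis using o1 o2 by (simp add: card_insert_disjoint)
  next
    case False
    then have c4: "card (pp j \<union> pp j') = 4" using cpp by (auto simp: pp_def)
    show ?thesis
    proof (cases "sp k j \<notin> pp j'")
      case True
      then have "sp k j \<notin> insert (sp k j') (pp j \<union> pp j')" using nj sne by auto
      moreover have "sp k j' \<notin> pp j' \<or> True" by simp
      ultimately show ?thesis using fin c4 card_insert_le[of "pp j \<union> pp j'" "sp k j'"]
        by (simp add: card_insert_disjoint)
    next
      case False
      then have "sp k j' \<notin> pp j" using key by auto
      then have "sp k j' \<notin> pp j \<union> pp j'" using nj' by auto
      then have "card (insert (sp k j') (pp j \<union> pp j')) = 5" using c4 by (simp add: card_insert_disjoint)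
      then show ?thesis using card_insert_le[of "insert (sp k j') (pp j \<union> pp j')" "sp k j"] by simp
    qed
  qed
qed

lemma rw_far:
  assumes p: "p permutes {..<n}" and n: "n = 2 * k + 2" "3 \<le> k"
    and j: "j \<le> k" "j' \<le> k" "j \<noteq> j'"
  shows "5 \<le> hamming (rw n k p j) (rw n k p j')"
proof -
  define s where "s = sp k j"
  define s' where "s' = sp k j'"
  have inj: "inj p" using permutes_inj[OF p] .
  have sn: "s < n" "s' < n" using sp_lt[of j k] sp_lt[of j' k] j n unfolding s_def s'_def by auto
  have Pn: "pp j \<subseteq> {..<n}" "pp j' \<subseteq> {..<n}" using pp_lt[of j k] pp_lt[of j' k] j n by fastforce+
  have ps: "p s < n" "p s' < n" using sn permutes_in_image[OF p] by auto
  have pP: "p ` pp j \<subseteq> {..<n}" "p ` pp j' \<subseteq> {..<n}" using Pn permutes_in_image[OF p] by auto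
  have nsP: "p s \<notin> p ` pp j" "p s' \<notin> p ` pp j'"
    using sp_notin_pp[of j k] sp_notin_pp[of j' k] j n inj unfolding s_def s'_def
    by (auto simp: inj_image_mem_iff)
  have ss: "p s \<noteq> p s'" using sp_inj[of j k j'] j n inj unfolding s_def s'_def by (auto simp: inj_eq)
  have "hamming (rw n k p j) (rw n k p j') =
        card (insert (p s) (insert (p s') ((p ` pp j - p ` pp j') \<union> (p ` pp j' - p ` pp j))))"
    using ham_mk[OF ps nsP pP] ss unfolding rw_def s_def s'_def by simp
  also have "(p ` pp j - p ` pp j') \<union> (p ` pp j' - p ` pp j) = p ` (pp j \<union> pp j')"
    using pp_disj[OF j(3)] inj by (auto simp: image_set_diff[OF inj, symmetric])
  also have "insert (p s) (insert (p s') (p ` (pp j \<union> pp j'))) = p ` (insert s (insert s' (pp j \<union> pp j')))"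
    by simp
  also have "card \<dots> = card (insert s (insert s' (pp j \<union> pp j')))"
    by (rule card_image) (rule inj_on_subset[OF inj subset_UNIV])
  also have "5 \<le> \<dots>" using five_pos[OF j(1,2,3) n(2)] unfolding s_def s'_def .
  finally show ?thesis by simp
qed

lemma count_role:
  assumes n: "n = 2 * k + 2" "3 \<le> k"
    and w: "c < n" "c \<notin> Y" "Y \<subseteq> {..<n}" "card Y = 1 \<or> card Y = 2"
  shows "fact (n - 2) \<le> card {p. p permutes {..<n} \<and> (\<exists>j\<le>k. rw n k p j = mk n c Y)}"
proof -
  let ?T = "{p. p permutes {..<n} \<and> (\<exists>j\<le>k. rw n k p j = mk n c Y)}"
  have finT: "finite ?T" by (rule finite_subset[OF _ finite_permutations[OF finite_lessThan[of n]]]) auto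
  show ?thesis
  proof (cases "card Y = 1")
    case True
    then obtain x where x: "Y = {x}" by (rule card_1_singletonE)
    have xn: "x < n" "x \<noteq> c" using x w by auto
    have sub: "{p. p permutes {..<n} \<and> p 0 = c \<and> p 1 = x} \<subseteq> ?T"
    proof
      fix p assume "p \<in> {p. p permutes {..<n} \<and> p 0 = c \<and> p 1 = x}"
      then have p: "p permutes {..<n}" "p 0 = c" "p 1 = x" by auto
      have "rw n k p 0 = mk n c Y" using p x by (simp add: rw_def sp_def pp_def)
      then show "p \<in> ?T" using p(1) by blast
    qed
    have "card {p. p permutes {..<n} \<and> p 0 = c \<and> p 1 = x} = fact (card {..<n} - 2)"
      by (rule card_perm2) (use xn w n in auto)
    then have "fact (n - 2) = card {p. p permutes {..<n} \<and> p 0 = c \<and> p 1 = x}" by simp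
    also have "\<dots> \<le> card ?T" by (rule card_mono[OF finT sub])
    finally show ?thesis .
  next
    case False
    then have "card Y = 2" using w by simp
    then obtain u v where uv: "Y = {u, v}" "u \<noteq> v" by (meson card_2_iff)
    have uvn: "u < n" "v < n" "u \<noteq> c" "v \<noteq> c" using uv w by auto
    define A where "A = (\<lambda>i. {p. p permutes {..<n} \<and> p (sp k (Suc i)) = c \<and> p (2 * Suc i) = u \<and> p (2 * Suc i + 1) = v})"
    define A' where "A' = (\<lambda>i. {p. p permutes {..<n} \<and> p (sp k (Suc i)) = c \<and> p (2 * Suc i) = v \<and> p (2 * Suc i + 1) = u})"
    have pos: "sp k (Suc i) < n" "2 * Suc i < n" "2 * Suc i + 1 < n" "sp k (Suc i) \<noteq> 2 * Suc i"
      "sp k (Suc i) \<noteq> 2 * Suc i + 1" if i: "i < k" for i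
    proof -
      show "sp k (Suc i) < n" using sp_lt[of "Suc i" k] i n by auto
      show "2 * Suc i < n" "2 * Suc i + 1 < n" using i n by auto
      have "sp k (Suc i) \<notin> pp (Suc i)" using sp_notin_pp[of "Suc i" k] i n by auto
      then show "sp k (Suc i) \<noteq> 2 * Suc i" "sp k (Suc i) \<noteq> 2 * Suc i + 1" by (auto simp: pp_def)
    qed
    have cA: "card (A i) = fact (n - 3)" "card (A' i) = fact (n - 3)" if i: "i < k" for i
    proof -
      have "card (A i) = fact (card {..<n} - 3)" unfolding A_def
        by (rule card_perm3) (use pos[OF i] uvn uv w in auto)
      then show "card (A i) = fact (n - 3)" by simp
      have "card (A' i) = fact (card {..<n} - 3)" unfolding A'_def
        by (rule card_perm3) (use pos[OF i] uvn uv w in auto)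
      then show "card (A' i) = fact (n - 3)" by simp
    qed
    have finA: "finite (A i)" "finite (A' i)" for i
      unfolding A_def A'_def by (rule finite_subset[OF _ finite_permutations[OF finite_lessThan[of n]]], auto)+
    have disj1: "A i \<inter> A' i = {}" for i unfolding A_def A'_def using uv by auto
    have cAA: "card (A i \<union> A' i) = 2 * fact (n - 3)" if "i < k" for i
      using card_Un_disjoint[OF finA disj1] cA[OF that] by simp
    have disj2: "(A i \<union> A' i) \<inter> (A i' \<union> A' i') = {}" if "i < k" "i' < k" "i \<noteq> i'" for i i'
    proof -
      have "sp k (Suc i) \<noteq> sp k (Suc i')" using sp_inj[of "Suc i" k "Suc i'"] that by auto
      then have ne: "\<forall>p. p permutes {..<n} \<longrightarrow> p (sp k (Suc i)) \<noteq> p (sp k (Suc i'))"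
        by (metis permutes_inj injD)
      show ?thesis
      proof (rule ccontr)
        assume "(A i \<union> A' i) \<inter> (A i' \<union> A' i') \<noteq> {}"
        then obtain p where "p \<in> A i \<union> A' i" "p \<in> A i' \<union> A' i'" by blast
        then have "p permutes {..<n}" "p (sp k (Suc i)) = c" "p (sp k (Suc i')) = c"
          unfolding A_def A'_def by auto
        then show False using ne by auto
      qed
    qed
    have sub: "(\<Union>i\<in>{..<k}. A i \<union> A' i) \<subseteq> ?T"
    proof
      fix p assume "p \<in> (\<Union>i\<in>{..<k}. A i \<union> A' i)"
      then obtain i where i: "i < k" and pA: "p \<in> A i \<union> A' i" by auto
      then have pp: "p permutes {..<n}" unfolding A_def A'_def by auto
      have "p ` pp (Suc i) = {u, v}" using pA unfolding A_def A'_def by (auto simp: pp_def)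
      moreover have "p (sp k (Suc i)) = c" using pA unfolding A_def A'_def by auto
      ultimately have "rw n k p (Suc i) = mk n c Y" using uv by (simp add: rw_def)
      then show "p \<in> ?T" using pp i by (auto intro!: exI[where x = "Suc i"])
    qed
    have "card (\<Union>i\<in>{..<k}. A i \<union> A' i) = (\<Sum>i<k. card (A i \<union> A' i))"
      by (rule card_UN_disjoint) (use finA disj2 in auto)
    also have "\<dots> = (\<Sum>i<k. 2 * fact (n - 3))" by (rule sum.cong) (auto simp: cAA)
    also have "\<dots> = fact (n - 2)"
    proof -
      have "n - 2 = Suc (n - 3)" using n by simp
      then have "fact (n - 2) = (n - 2) * fact (n - 3)" by (simp del: fact_Suc add: fact_Suc)
      then show ?thesis using n by simp
    qed
    finally have "fact (n - 2) = card (\<Union>i\<in>{..<k}. A i \<union> A' i)" by simp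
    also have "\<dots> \<le> card ?T" by (rule card_mono[OF finT sub])
    finally show ?thesis .
  qed
qed

lemma bound_a1:
  assumes n: "n = 2 * k + 2" "3 \<le> k"
    and CX: "C \<subseteq> X n" and d: "\<forall>u\<in>C. \<forall>v\<in>C. hamming u v \<le> 4"
    and o12: "\<forall>w\<in>C. card (ones w) = 1 \<or> card (ones w) = 2"
  shows "card C \<le> n * (n - 1)"
proof -
  define Pm where "Pm = {p. p permutes {..<n}}"
  define I where "I = (\<lambda>p. rw n k p ` {..k})"
  have finP: "finite Pm" unfolding Pm_def by (rule finite_permutations) simp
  have cP: "card Pm = fact n" unfolding Pm_def by (rule card_permutations) simp_all
  have finC: "finite C" using CX finite_X finite_subset by blast
  have le1: "card (C \<inter> I p) \<le> 1" if p: "p \<in> Pm" for p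
  proof -
    have "\<forall>x\<in>C \<inter> I p. \<forall>y\<in>C \<inter> I p. x = y"
    proof (intro ballI)
      fix x y assume x: "x \<in> C \<inter> I p" and y: "y \<in> C \<inter> I p"
      then obtain j j' where j: "j \<le> k" "x = rw n k p j" and j': "j' \<le> k" "y = rw n k p j'"
        unfolding I_def by auto
      show "x = y"
      proof (cases "j = j'")
        case True then show ?thesis using j j' by simp
      next
        case False
        have "5 \<le> hamming x y" using rw_far[of p n k j j'] p n j j' False unfolding Pm_def by simp
        moreover have "hamming x y \<le> 4" using d x y by blast
        ultimately show ?thesis by simp
      qed
    qed
    moreover have "finite (C \<inter> I p)" using finC by simp
    ultimately show ?thesis using card_le_Suc0_iff_eq[of "C \<inter> I p"] by simp
  qed
  have "(\<Sum>p\<in>Pm. card (C \<inter> I p)) \<le> (\<Sum>p\<in>Pm. 1)" by (rule sum_mono) (rule le1)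
  also have "\<dots> = fact n" using cP by simp
  finally have up: "(\<Sum>p\<in>Pm. card (C \<inter> I p)) \<le> fact n" .
  have "(\<Sum>p\<in>Pm. card (C \<inter> I p)) = (\<Sum>p\<in>Pm. \<Sum>w\<in>C. if w \<in> I p then 1 else 0)"
  proof (rule sum.cong[OF refl])
    fix p
    have "card (C \<inter> I p) = (\<Sum>w\<in>C \<inter> I p. 1)" by (rule card_eq_sum)
    also have "\<dots> = (\<Sum>w\<in>C. if w \<in> I p then 1 else 0)" by (rule sum.inter_restrict[OF finC])
    finally show "card (C \<inter> I p) = (\<Sum>w\<in>C. if w \<in> I p then 1 else 0)" .
  qed
  also have "\<dots> = (\<Sum>w\<in>C. \<Sum>p\<in>Pm. if w \<in> I p then 1 else 0)" by (rule sum.swap)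
  also have "\<dots> = (\<Sum>w\<in>C. card {p \<in> Pm. w \<in> I p})"
  proof (rule sum.cong[OF refl])
    fix w
    have "card {p \<in> Pm. w \<in> I p} = card (Pm \<inter> {p. w \<in> I p})" by (rule arg_cong[where f=card]) blast
    also have "\<dots> = (\<Sum>p\<in>Pm \<inter> {p. w \<in> I p}. 1)" by (rule card_eq_sum)
    also have "\<dots> = (\<Sum>p\<in>Pm. if p \<in> {p. w \<in> I p} then 1 else 0)" by (rule sum.inter_restrict[OF finP])
    finally show "(\<Sum>p\<in>Pm. if w \<in> I p then 1 else 0) = card {p \<in> Pm. w \<in> I p}" by simp
  qed
  finally have eq: "(\<Sum>p\<in>Pm. card (C \<inter> I p)) = (\<Sum>w\<in>C. card {p \<in> Pm. w \<in> I p})" .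
  have low: "fact (n - 2) \<le> card {p \<in> Pm. w \<in> I p}" if w: "w \<in> C" for w
  proof -
    obtain c where c: "c < n" "c \<notin> ones w" "ones w \<subseteq> {..<n}" "w = mk n c (ones w)"
      using X_mk[of w n] CX w by blast
    define Y where "Y = ones w"
    have wY: "w = mk n c Y" using c(4) unfolding Y_def .
    have cY: "c \<notin> Y" "Y \<subseteq> {..<n}" "w = mk n c Y" "card Y = 1 \<or> card Y = 2"
      using c(2) c(3) wY o12 w unfolding Y_def by blast+
    have memI: "w \<in> I p \<longleftrightarrow> (\<exists>j\<le>k. rw n k p j = mk n c Y)" for p
      unfolding I_def cY(3) by (auto simp: image_iff) (metis atMost_iff)
    have "{p \<in> Pm. w \<in> I p} = {p. p permutes {..<n} \<and> (\<exists>j\<le>k. rw n k p j = mk n c Y)}"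
      unfolding Pm_def using memI by blast
    moreover have "fact (n - 2) \<le> card {p. p permutes {..<n} \<and> (\<exists>j\<le>k. rw n k p j = mk n c Y)}"
      by (rule count_role[OF n c(1) cY(1,2,4)])
    ultimately show ?thesis by simp
  qed
  have "card C * fact (n - 2) = (\<Sum>w\<in>C. fact (n - 2))" by simp
  also have "\<dots> \<le> (\<Sum>w\<in>C. card {p \<in> Pm. w \<in> I p})" by (rule sum_mono) (rule low)
  also have "\<dots> \<le> fact n" using eq up by simp
  also have "fact n = n * (n - 1) * fact (n - 2)"
  proof -
    obtain m where m: "n = Suc (Suc m)" using n by (metis add_2_eq_Suc')
    have "fact (Suc (Suc m)) = Suc (Suc m) * (Suc m * fact m)" by (simp del: fact_Suc add: fact_Suc)
    then show ?thesis unfolding m by (simp add: algebra_simps)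
  qed
  finally have "card C * fact (n - 2) \<le> n * (n - 1) * fact (n - 2)" .
  moreover have "(0::nat) < fact (n - 2)" by simp
  ultimately show ?thesis by (simp only: mult_le_cancel2)
qed

lemma bound_a:
  assumes n: "n = 2 * k + 2" "3 \<le> k"
    and CX: "C \<subseteq> X n" and d: "\<forall>u\<in>C. \<forall>v\<in>C. hamming u v \<le> 4"
    and o2: "\<forall>w\<in>C. card (ones w) \<le> 2"
  shows "card C \<le> n ^ 2"
proof -
  define C0 where "C0 = {w \<in> C. ones w = {}}"
  define C1 where "C1 = {w \<in> C. ones w \<noteq> {}}"
  have finC: "finite C" using CX finite_X finite_subset by blast
  have "C0 \<subseteq> (\<lambda>c. mk n c {}) ` {..<n}"
  proof
    fix w assume w: "w \<in> C0"
    then obtain c where c: "c < n" "c \<notin> ones w" "ones w \<subseteq> {..<n}" "w = mk n c (ones w)"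
      using X_mk[of w n] CX unfolding C0_def by blast
    have "ones w = {}" using w unfolding C0_def by blast
    then have "w = mk n c {}" using c(4) by metis
    then show "w \<in> (\<lambda>c. mk n c {}) ` {..<n}" using c(1) by blast
  qed
  note sub0 = this
  have "card C0 \<le> card ((\<lambda>c. mk n c {}) ` {..<n})" by (rule card_mono[OF _ sub0]) simp
  also have "\<dots> \<le> card {..<n}" by (rule card_image_le) simp
  finally have c0: "card C0 \<le> n" by simp
  have c1: "card C1 \<le> n * (n - 1)"
  proof (rule bound_a1[OF n])
    show "C1 \<subseteq> X n" using CX unfolding C1_def by auto
    show "\<forall>u\<in>C1. \<forall>v\<in>C1. hamming u v \<le> 4" using d unfolding C1_def by auto
    show "\<forall>w\<in>C1. card (ones w) = 1 \<or> card (ones w) = 2"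
    proof
      fix w assume w: "w \<in> C1"
      have "finite (ones w)" by (simp add: ones_def)
      then have "card (ones w) \<noteq> 0" using w unfolding C1_def by simp
      then show "card (ones w) = 1 \<or> card (ones w) = 2" using o2 w unfolding C1_def by auto
    qed
  qed
  have "C = C0 \<union> C1" unfolding C0_def C1_def by auto
  then have "card C \<le> card C0 + card C1" by (simp add: card_Un_le)
  also have "\<dots> \<le> n + n * (n - 1)" using c0 c1 by simp
  also have "\<dots> = n ^ 2" using n by (simp add: power2_eq_square algebra_simps)
  finally show ?thesis .
qed

lemma card_insert_le_Suc: "finite A \<Longrightarrow> card (insert x A) \<le> Suc (card A)"
  by (simp add: card_insert_if)

lemma exist_B:
  assumes n: "4 \<le> n"
  shows "\<exists>B. B \<subseteq> X n \<and> diam B = 4 \<and> card B = n ^ 2"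
proof -
  define E where "E = {(c, x). c < n \<and> x < n \<and> c \<noteq> x}"
  define B0 where "B0 = (\<lambda>c. mk n c {}) ` {..<n}"
  define B1 where "B1 = (\<lambda>(c, x). mk n c {x}) ` E"
  define B where "B = B0 \<union> B1"
  have BX: "B \<subseteq> X n" unfolding B_def B0_def B1_def E_def using mk_in_X by auto
  have inj0: "inj_on (\<lambda>c. mk n c {}) {..<n}"
    by (rule inj_onI) (use mk_eq_iff in auto)
  have inj1: "inj_on (\<lambda>(c, x). mk n c {x}) E"
  proof (rule inj_onI)
    fix a b assume a: "a \<in> E" and b: "b \<in> E" and eq: "(\<lambda>(c, x). mk n c {x}) a = (\<lambda>(c, x). mk n c {x}) b"
    obtain c x where ax: "a = (c, x)" "c < n" "x < n" "c \<noteq> x" using a unfolding E_def by auto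
    obtain d y where by': "b = (d, y)" "d < n" "y < n" "d \<noteq> y" using b unfolding E_def by auto
    have "mk n c {x} = mk n d {y}" using eq ax by' by simp
    then have "c = d \<and> {x} = {y}" using mk_eq_iff[of c n d "{x}" "{y}"] ax by' by auto
    then show "a = b" using ax by' by simp
  qed
  have cE: "card E = n * n - n"
  proof -
    have "E = ({..<n} \<times> {..<n}) - (\<lambda>c. (c, c)) ` {..<n}" unfolding E_def by auto
    moreover have "card ((\<lambda>c. (c, c)) ` {..<n}) = n" by (subst card_image) (auto intro: inj_onI)
    moreover have "(\<lambda>c. (c, c)) ` {..<n} \<subseteq> {..<n} \<times> {..<n}" by auto
    ultimately show ?thesis by (simp add: card_Diff_subset card_cartesian_product)
  qed
  have disj: "B0 \<inter> B1 = {}"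
  proof -
    have "mk n c {} \<noteq> mk n d {x}" if "c < n" "d < n" "x < n" "d \<noteq> x" for c d x
      using mk_eq_iff[of c n d "{}" "{x}"] that by auto
    then show ?thesis unfolding B0_def B1_def E_def by auto
  qed
  have finE: "finite E"
  proof -
    have "E \<subseteq> {..<n} \<times> {..<n}" unfolding E_def by auto
    then show ?thesis by (rule finite_subset) simp
  qed
  have "card B = card B0 + card B1" unfolding B_def
    by (rule card_Un_disjoint) (use disj finE in \<open>simp_all add: B0_def B1_def\<close>)
  also have "card B0 = n" unfolding B0_def using card_image[OF inj0] by simp
  also have "card B1 = n * n - n" unfolding B1_def using card_image[OF inj1] cE by simp
  also have "n + (n * n - n) = n ^ 2" by (simp add: power2_eq_square)
  finally have cB: "card B = n ^ 2" .
  have form: "\<exists>c Z. w = mk n c Z \<and> c < n \<and> c \<notin> Z \<and> Z \<subseteq> {..<n} \<and> finite Z \<and> card Z \<le> 1" if "w \<in> B" for w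
    using that unfolding B_def B0_def B1_def E_def by fastforce
  have le4: "hamming u v \<le> 4" if uB: "u \<in> B" and vB: "v \<in> B" for u v
  proof -
    obtain c Z where u: "u = mk n c Z" "c < n" "c \<notin> Z" "Z \<subseteq> {..<n}" "finite Z" "card Z \<le> 1"
      using form[OF uB] by blast
    obtain d Y where v: "v = mk n d Y" "d < n" "d \<notin> Y" "Y \<subseteq> {..<n}" "finite Y" "card Y \<le> 1"
      using form[OF vB] by blast
    have cs: "card ((Z - Y) \<union> (Y - Z)) \<le> 2"
    proof -
      have "card ((Z - Y) \<union> (Y - Z)) \<le> card (Z \<union> Y)" by (rule card_mono) (use u v in auto)
      also have "\<dots> \<le> card Z + card Y" by (rule card_Un_le)
      finally show ?thesis using u v by simp
    qed
    have fs: "finite ((Z - Y) \<union> (Y - Z))" using u v by simp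
    have "hamming u v = card (if c = d then (Z - Y) \<union> (Y - Z) else insert c (insert d ((Z - Y) \<union> (Y - Z))))"
      using ham_mk[of c n d Z Y] u v by simp
    also have "\<dots> \<le> 4"
    proof (cases "c = d")
      case True then show ?thesis using cs by simp
    next
      case False
      have "card (insert c (insert d ((Z - Y) \<union> (Y - Z)))) \<le> Suc (card (insert d ((Z - Y) \<union> (Y - Z))))"
        using fs by (simp add: card_insert_le_Suc)
      also have "\<dots> \<le> Suc (Suc (card ((Z - Y) \<union> (Y - Z))))" using card_insert_le_Suc[OF fs, of d] by simp
      finally show ?thesis using False cs by simp
    qed
    finally show ?thesis .
  qed
  define S where "S = {hamming u v | u v. u \<in> B \<and> v \<in> B}"
  have Ssub: "S \<subseteq> {..4}" unfolding S_def using le4 by auto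
  then have finS: "finite S" by (rule finite_subset) simp
  have in4: "4 \<in> S"
  proof -
    have e1: "(0, 1) \<in> E" and e2: "(2, 3) \<in> E" using n unfolding E_def by auto
    have "mk n 0 {1} \<in> B" "mk n 2 {3} \<in> B" using e1 e2 unfolding B_def B1_def by force+
    moreover have "hamming (mk n 0 {1}) (mk n 2 {3}) = 4"
      using ham_mk[of 0 n 2 "{1}" "{3}"] n by simp
    ultimately show ?thesis unfolding S_def by force
  qed
  have "diam B = Max S" unfolding diam_def S_def by simp
  also have "\<dots> = 4" by (rule Max_eqI[OF finS]) (use Ssub in4 in auto)
  finally show ?thesis using BX cB by blast
qed

theorem proposition1:
  fixes m n :: nat
  assumes "n = 2 ^ m" and "n \<ge> 8"
  shows "(\<forall>B. B \<subseteq> X n \<and> (\<forall>u\<in>B. \<forall>v\<in>B. hamming u v \<le> 4) \<longrightarrow> card B \<le> n ^ 2)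
       \<and> (\<exists>B. B \<subseteq> X n \<and> diam B = 4 \<and> card B = n ^ 2)"
proof
  have "m \<noteq> 0" using assms by (cases m) auto
  then have "even n" using assms by simp
  then obtain j where j: "n = 2 * j" by (rule evenE)
  define k where "k = j - 1"
  have nk: "n = 2 * k + 2" and k3: "3 \<le> k" using j assms unfolding k_def by auto
  show "\<forall>B. B \<subseteq> X n \<and> (\<forall>u\<in>B. \<forall>v\<in>B. hamming u v \<le> 4) \<longrightarrow> card B \<le> n ^ 2"
  proof (intro allI impI)
    fix B assume B: "B \<subseteq> X n \<and> (\<forall>u\<in>B. \<forall>v\<in>B. hamming u v \<le> 4)"
    obtain C where C: "C \<subseteq> X n" "card C = card B" "\<forall>u\<in>C. \<forall>v\<in>C. hamming u v \<le> 4"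
      "\<forall>w\<in>C. \<forall>i<n. w ! i = One \<longrightarrow> w[i := Zero] \<in> C"
      using exists_downclosed[of B n] B by blast
    have "card C \<le> n ^ 2"
    proof (cases "\<forall>w\<in>C. card (ones w) \<le> 2")
      case True
      then show ?thesis using bound_a[OF nk k3 C(1) C(3)] by blast
    next
      case False
      then obtain w0 where w0: "w0 \<in> C" "3 \<le> card (ones w0)" by auto
      have "card C \<le> 8 * n" by (rule bound_b[OF C(1) C(3) C(4) w0]) (use assms in simp)
      also have "8 * n \<le> n ^ 2" using assms by (simp add: power2_eq_square)
      finally show ?thesis .
    qed
    then show "card B \<le> n ^ 2" using C(2) by simp
  qed
  show "\<exists>B. B \<subseteq> X n \<and> diam B = 4 \<and> card B = n ^ 2"
    by (rule exist_B) (use assms in simp)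
qed

end
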